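(* Let $(X_1,\dots,X_M)$ have density $f\in\mathrm{MMEam}$ of the form $f(x_1,\dots,x_M)=\sum_{\mathbf i\in\mathscr S}p_{\mathbf i}f_{i_1}(x_1)\cdots f_{i_M}(x_M)$, let $\mathbf z=(z_1,\dots,z_M)\in[0,\infty)^M$ with $\mathbb P(X_1>z_1,\dots,X_M>z_M)>0$, and let $r_1,\dots,r_M\in\mathbb N_0$. Then $$\mathbb E\Big[\prod_{j=1}^M(X_j-z_j)^{r_j}\,\Big|\,X_1>z_1,\dots,X_M>z_M\Big]=\sum_{\mathbf i\in\mathscr S}p^{\mathrm{RL}}_{\mathbf z,\mathbf i}\prod_{j=1}^M r_j!\,\alpha^{\mathrm{RL}}_{z_j,i_j}(-T_{i_j})^{-(r_j+1)}t_{i_j},$$ where $\alpha^{\mathrm{RL}}_{z,k}=\alpha_ke^{T_kz}/(\alpha_ke^{T_kz}l_k)$ for $z\ge0$, $1\le k\le L$, and $$p^{\mathrm{RL}}_{\mathbf z,\mathbf i}=\frac{p_{\mathbf i}\prod_{j=1}^M(\alpha_{i_j}e^{T_{i_j}z_j}l_{i_j})}{\sum_{\mathbf h\in\mathscr S}p_{\mathbf h}\prod_{j=1}^M(\alpha_{h_j}e^{T_{h_j}z_j}l_{h_j})}.$$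
   Context: An ME density is a probability density on $[0,\infty)$ of the form $g(x)=\alpha e^{Tx}t$ ($\alpha$ real row vector, $T$ real square matrix, $t$ real column vector); triples are taken with all eigenvalues of $T$ having strictly negative real part, so $T$ is invertible; $l=(-T)^{-1}t$ and the survival function is $\alpha e^{Tx}l$. MMEam: fix $L,M\in\mathbb N_+$ and ME densities $f_1,\dots,f_L$ with triples $(\alpha_j,T_j,t_j)$, $l_j=(-T_j)^{-1}t_j$. Let $\mathscr S=\{1,\dots,L\}^M$, $\mathbf i=(i_1,\dots,i_M)$, and real numbers $p_{\mathbf i}$ (possibly negative) with $\sum p_{\mathbf i}=1$; $f(x)=\sum_{\mathbf i}p_{\mathbf i}f_{i_1}(x_1)\cdots f_{i_M}(x_M)$ on $[0,\infty)^M$ is an MMEam density if $f\ge0$. *)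

theory Defs
  imports "HOL-Probability.Probability" "Jordan_Normal_Form.Matrix" "Jordan_Normal_Form.Char_Poly"
begin

definition mat_exp :: "real mat \<Rightarrow> real mat" where
  "mat_exp A = mat (dim_row A) (dim_col A) (\<lambda>(i,j). \<Sum>k. (A ^\<^sub>m k) $$ (i,j) / fact k)"

definition row_mult :: "real vec \<Rightarrow> real mat \<Rightarrow> real vec" where
  "row_mult a A = vec (dim_col A) (\<lambda>j. scalar_prod a (col A j))"

definition minv :: "real mat \<Rightarrow> real mat" where
  "minv A = (THE B. B \<in> carrier_mat (dim_row A) (dim_row A) \<and>
                    A * B = 1\<^sub>m (dim_row A) \<and> B * A = 1\<^sub>m (dim_row A))"

definition me_row :: "real vec \<Rightarrow> real mat \<Rightarrow> real \<Rightarrow> real vec" where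
  "me_row a T x = row_mult a (mat_exp (x \<cdot>\<^sub>m T))"

definition me_fun :: "real vec \<Rightarrow> real mat \<Rightarrow> real vec \<Rightarrow> real \<Rightarrow> real" where
  "me_fun a T t x = scalar_prod (me_row a T x) t"

definition me_l :: "real mat \<Rightarrow> real vec \<Rightarrow> real vec" where
  "me_l T t = minv (- T) *\<^sub>v t"

definition ME_triple :: "nat \<Rightarrow> real vec \<Rightarrow> real mat \<Rightarrow> real vec \<Rightarrow> bool" where
  "ME_triple n a T t \<longleftrightarrow>
     a \<in> carrier_vec n \<and> T \<in> carrier_mat n n \<and> t \<in> carrier_vec n \<and>
     (\<forall>ev. eigenvalue (map_mat complex_of_real T) ev \<longrightarrow> Re ev < 0) \<and>
     (\<forall>x\<ge>0. me_fun a T t x \<ge> 0) \<and>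
     (me_fun a T t has_integral 1) {0..}"

text \<open>Index set S = {0..<L}^M (0-based), index vectors as functions on {0..<M}.\<close>
definition idx_set :: "nat \<Rightarrow> nat \<Rightarrow> (nat \<Rightarrow> nat) set" where
  "idx_set L M = PiE {..<M} (\<lambda>_. {..<L})"

definition mmeam_fun ::
  "nat \<Rightarrow> nat \<Rightarrow> ((nat \<Rightarrow> nat) \<Rightarrow> real) \<Rightarrow> (nat \<Rightarrow> real vec) \<Rightarrow> (nat \<Rightarrow> real mat)
     \<Rightarrow> (nat \<Rightarrow> real vec) \<Rightarrow> (nat \<Rightarrow> real) \<Rightarrow> real" where
  "mmeam_fun L M p a T t x =
     (if \<forall>j<M. 0 \<le> x j
      then \<Sum>i\<in>idx_set L M. p i * (\<Prod>j<M. me_fun (a (i j)) (T (i j)) (t (i j)) (x j))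
      else 0)"

definition cond_exp_event :: "'a measure \<Rightarrow> ('a \<Rightarrow> real) \<Rightarrow> 'a set \<Rightarrow> real" where
  "cond_exp_event P Y A = (\<integral>\<omega>. indicator A \<omega> * Y \<omega> \<partial>P) / measure P A"

definition alpha_RL :: "real vec \<Rightarrow> real mat \<Rightarrow> real vec \<Rightarrow> real \<Rightarrow> real vec" where
  "alpha_RL a T t z = (1 / scalar_prod (me_row a T z) (me_l T t)) \<cdot>\<^sub>v me_row a T z"

definition p_RL ::
  "nat \<Rightarrow> nat \<Rightarrow> ((nat \<Rightarrow> nat) \<Rightarrow> real) \<Rightarrow> (nat \<Rightarrow> real vec) \<Rightarrow> (nat \<Rightarrow> real mat)
     \<Rightarrow> (nat \<Rightarrow> real vec) \<Rightarrow> (nat \<Rightarrow> real) \<Rightarrow> (nat \<Rightarrow> nat) \<Rightarrow> real" where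
  "p_RL L M p a T t z i =
     p i * (\<Prod>j<M. scalar_prod (me_row (a (i j)) (T (i j)) (z j)) (me_l (T (i j)) (t (i j))))
     / (\<Sum>h\<in>idx_set L M. p h *
          (\<Prod>j<M. scalar_prod (me_row (a (h j)) (T (h j)) (z j)) (me_l (T (h j)) (t (h j)))))"

end

theory Submission
  imports Defs "Jordan_Normal_Form.Spectral_Radius"
begin

lemma pascal_sum:
  fixes s t :: real and e :: "nat \<Rightarrow> real"
  shows "(\<Sum>m\<le>Suc k. real (Suc k choose m) * s^m * t^(Suc k - m) * e m)
       = s * (\<Sum>m\<le>k. real (k choose m) * s^m * t^(k-m) * e (Suc m))
         + t * (\<Sum>m\<le>k. real (k choose m) * s^m * t^(k-m) * e m)"
proof -
  have "(\<Sum>m\<le>Suc k. real (Suc k choose m) * s^m * t^(Suc k - m) * e m)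
     = t^(Suc k) * e 0 + (\<Sum>m\<le>k. real (Suc k choose Suc m) * s^(Suc m) * t^(k - m) * e (Suc m))"
    by (subst sum.atMost_Suc_shift) simp
  also have "(\<Sum>m\<le>k. real (Suc k choose Suc m) * s^(Suc m) * t^(k - m) * e (Suc m))
     = (\<Sum>m\<le>k. real (k choose m) * s^(Suc m) * t^(k - m) * e (Suc m))
       + (\<Sum>m\<le>k. real (k choose Suc m) * s^(Suc m) * t^(k - m) * e (Suc m))"
    by (simp only: binomial_Suc_Suc of_nat_add distrib_right sum.distrib)
  also have "(\<Sum>m\<le>k. real (k choose m) * s^(Suc m) * t^(k - m) * e (Suc m))
     = s * (\<Sum>m\<le>k. real (k choose m) * s^m * t^(k-m) * e (Suc m))"
    by (simp only: sum_distrib_left power_Suc mult_ac)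
  finally have F: "(\<Sum>m\<le>Suc k. real (Suc k choose m) * s^m * t^(Suc k - m) * e m) = t ^ Suc k * e 0 +
   (s * (\<Sum>m\<le>k. real (k choose m) * s ^ m * t ^ (k - m) * e (Suc m)) +
    (\<Sum>m\<le>k. real (k choose Suc m) * s ^ Suc m * t ^ (k - m) * e (Suc m)))" .
  have G: "t^(Suc k) * e 0 + (\<Sum>m\<le>k. real (k choose Suc m) * s^(Suc m) * t^(k - m) * e (Suc m))
     = t * (\<Sum>m\<le>k. real (k choose m) * s^m * t^(k-m) * e m)"
  proof (cases k)
    case 0
    then show ?thesis by simp
  next
    case (Suc k')
    have "(\<Sum>m\<le>k. real (k choose Suc m) * s^(Suc m) * t^(k - m) * e (Suc m))
        = (\<Sum>m\<le>k'. real (k choose Suc m) * s^(Suc m) * t^(k - m) * e (Suc m))"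
      using Suc by (simp add: sum.atMost_Suc binomial_eq_0)
    also have "\<dots> = t * (\<Sum>m\<le>k'. real (k choose Suc m) * s^(Suc m) * t^(k' - m) * e (Suc m))"
      unfolding sum_distrib_left
    proof (intro sum.cong refl)
      fix m assume "m \<in> {..k'}"
      then have km: "k - m = Suc (k' - m)" using Suc by simp
      show "real (k choose Suc m) * s^(Suc m) * t^(k - m) * e (Suc m)
          = t * (real (k choose Suc m) * s^(Suc m) * t^(k' - m) * e (Suc m))"
        unfolding km by (simp only: power_Suc mult_ac)
    qed
    finally have 1: "(\<Sum>m\<le>k. real (k choose Suc m) * s^(Suc m) * t^(k - m) * e (Suc m))
        = t * (\<Sum>m\<le>k'. real (k choose Suc m) * s^(Suc m) * t^(k' - m) * e (Suc m))" .
    have 2: "(\<Sum>m\<le>k. real (k choose m) * s^m * t^(k-m) * e m)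
        = t^k * e 0 + (\<Sum>m\<le>k'. real (k choose Suc m) * s^(Suc m) * t^(k' - m) * e (Suc m))"
      unfolding Suc by (subst sum.atMost_Suc_shift) simp
    show ?thesis unfolding 1 2 by (simp only: distrib_left power_Suc mult_ac)
  qed
  show ?thesis unfolding F G[symmetric] by simp
qed

lemma binom_mat_entry:
  fixes A :: "real mat"
  assumes A: "A \<in> carrier_mat n n" and i: "i < n" and j: "j < n"
  shows "((s \<cdot>\<^sub>m A + t \<cdot>\<^sub>m 1\<^sub>m n) ^\<^sub>m k) $$ (i,j)
     = (\<Sum>m\<le>k. real (k choose m) * s^m * t^(k-m) * (A ^\<^sub>m m) $$ (i,j))"
  using j
proof (induction k arbitrary: j)
  case 0
  then show ?case using i A by simp
next
  case (Suc k)
  let ?M = "s \<cdot>\<^sub>m A + t \<cdot>\<^sub>m 1\<^sub>m n"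
  have M: "?M \<in> carrier_mat n n" using A by auto
  have "(?M ^\<^sub>m Suc k) $$ (i,j) = (\<Sum>l<n. (?M ^\<^sub>m k) $$ (i,l) * ?M $$ (l,j))"
    using M i Suc.prems by (simp add: scalar_prod_def atLeast0LessThan)
  also have "\<dots> = (\<Sum>l<n. (?M ^\<^sub>m k) $$ (i,l) * (s * A $$ (l,j) + t * (if l = j then 1 else 0)))"
    using A Suc.prems by (intro sum.cong) auto
  also have "\<dots> = (\<Sum>l<n. s * ((?M ^\<^sub>m k) $$ (i,l) * A $$ (l,j)) + (if l = j then t * (?M ^\<^sub>m k) $$ (i,l) else 0))"
    by (intro sum.cong) (auto simp: algebra_simps)
  also have "\<dots> = s * (\<Sum>l<n. (?M ^\<^sub>m k) $$ (i,l) * A $$ (l,j)) + t * (?M ^\<^sub>m k) $$ (i,j)"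
    using Suc.prems by (simp add: sum.distrib sum_distrib_left sum.delta)
  also have "(\<Sum>l<n. (?M ^\<^sub>m k) $$ (i,l) * A $$ (l,j))
     = (\<Sum>l<n. (\<Sum>m\<le>k. real (k choose m) * s^m * t^(k-m) * (A ^\<^sub>m m) $$ (i,l)) * A $$ (l,j))"
    using Suc.IH by (intro sum.cong) auto
  also have "\<dots> = (\<Sum>m\<le>k. real (k choose m) * s^m * t^(k-m) * (\<Sum>l<n. (A ^\<^sub>m m) $$ (i,l) * A $$ (l,j)))"
    by (simp add: sum_distrib_left sum_distrib_right algebra_simps sum.swap[of _ "{..<n}"])
  also have "\<dots> = (\<Sum>m\<le>k. real (k choose m) * s^m * t^(k-m) * (A ^\<^sub>m Suc m) $$ (i,j))"
    using A i Suc.prems by (intro sum.cong) (auto simp: scalar_prod_def atLeast0LessThan)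
  finally show ?case
    using Suc.IH[OF Suc.prems] pascal_sum[of k s t "\<lambda>m. (A ^\<^sub>m m) $$ (i,j)"] by simp
qed

lemma pow_entry_bound:
  fixes A :: "real mat"
  assumes A: "A \<in> carrier_mat n n" and b: "\<And>i j. i < n \<Longrightarrow> j < n \<Longrightarrow> \<bar>A $$ (i,j)\<bar> \<le> b"
    and i: "i < n" and j: "j < n"
  shows "\<bar>(A ^\<^sub>m k) $$ (i,j)\<bar> \<le> (real n * b) ^ k"
  using j
proof (induction k arbitrary: j)
  case 0
  then show ?case using i A by simp
next
  case (Suc k)
  have b0: "0 \<le> b" using b[OF i i] by linarith
  have "(A ^\<^sub>m Suc k) $$ (i,j) = (\<Sum>l<n. (A ^\<^sub>m k) $$ (i,l) * A $$ (l,j))"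
    using A i Suc.prems by (simp add: scalar_prod_def atLeast0LessThan)
  also have "\<bar>\<dots>\<bar> \<le> (\<Sum>l<n. \<bar>(A ^\<^sub>m k) $$ (i,l) * A $$ (l,j)\<bar>)" by (rule sum_abs)
  also have "\<dots> \<le> (\<Sum>l<n. (real n * b) ^ k * b)"
    apply (intro sum_mono)
    unfolding abs_mult
    apply (rule mult_mono)
    using Suc.IH b Suc.prems b0 by auto
  also have "\<dots> = (real n * b) ^ Suc k" by (simp add: algebra_simps)
  finally show ?case .
qed

lemma pow_smult_mat:
  fixes A :: "real mat"
  assumes A: "A \<in> carrier_mat n n"
  shows "(x \<cdot>\<^sub>m A) ^\<^sub>m k = x ^ k \<cdot>\<^sub>m (A ^\<^sub>m k)"
proof (induction k)
  case 0
  then show ?case using A by (auto intro!: eq_matI)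
next
  case (Suc k)
  have "(x \<cdot>\<^sub>m A) ^\<^sub>m Suc k = (x ^ k \<cdot>\<^sub>m (A ^\<^sub>m k)) * (x \<cdot>\<^sub>m A)" using Suc by simp
  also have "\<dots> = x ^ Suc k \<cdot>\<^sub>m (A ^\<^sub>m Suc k)"
    using A by (auto intro!: eq_matI simp: scalar_prod_def sum_distrib_left algebra_simps)
  finally show ?case .
qed

lemma entry_bound_exists:
  fixes T :: "real mat"
  shows "\<exists>b\<ge>0. \<forall>i<n. \<forall>j<n. \<bar>T $$ (i,j)\<bar> \<le> b"
proof -
  let ?b = "(\<Sum>i<n. \<Sum>j<n. \<bar>T $$ (i,j)\<bar>)"
  have "\<bar>T $$ (i,j)\<bar> \<le> ?b" if "i < n" "j < n" for i j
  proof -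
    have "\<bar>T $$ (i,j)\<bar> \<le> (\<Sum>j<n. \<bar>T $$ (i,j)\<bar>)"
      using that by (intro member_le_sum) auto
    also have "\<dots> \<le> ?b"
      using that by (intro member_le_sum[of i "{..<n}" "\<lambda>i. \<Sum>j<n. \<bar>T $$ (i,j)\<bar>"]) (auto intro: sum_nonneg)
    finally show ?thesis .
  qed
  moreover have "?b \<ge> 0" by (intro sum_nonneg) auto
  ultimately show ?thesis by blast
qed

lemma summable_pow_entry:
  fixes T :: "real mat"
  assumes T: "T \<in> carrier_mat n n" and i: "i < n" and j: "j < n"
  shows "summable (\<lambda>k. \<bar>(T ^\<^sub>m k) $$ (i,j) / fact k * x^k\<bar>)"
proof -
  obtain b where b0: "b \<ge> 0" and b: "\<And>i j. i < n \<Longrightarrow> j < n \<Longrightarrow> \<bar>T $$ (i,j)\<bar> \<le> b"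
    using entry_bound_exists[of n T] by blast
  have "\<bar>(T ^\<^sub>m k) $$ (i,j) / fact k * x^k\<bar> \<le> inverse (fact k) * (real n * b * \<bar>x\<bar>) ^ k" for k
  proof -
    have "\<bar>(T ^\<^sub>m k) $$ (i,j) / fact k * x^k\<bar> = \<bar>(T ^\<^sub>m k) $$ (i,j)\<bar> * \<bar>x\<bar>^k * inverse (fact k)"
      by (simp add: abs_mult power_abs divide_inverse)
    also have "\<dots> \<le> (real n * b) ^ k * \<bar>x\<bar>^k * inverse (fact k)"
      by (intro mult_right_mono pow_entry_bound[OF T b i j]) auto
    also have "\<dots> = inverse (fact k) * (real n * b * \<bar>x\<bar>) ^ k"
      by (simp only: power_mult_distrib mult_ac)
    finally show ?thesis .
  qed
  then have "\<exists>N. \<forall>k\<ge>N. \<bar>(T ^\<^sub>m k) $$ (i,j) / fact k * x^k\<bar> \<le> inverse (fact k) * (real n * b * \<bar>x\<bar>) ^ k"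
    by (intro exI[of _ 0] allI impI)
  then show ?thesis
    using summable_rabs_comparison_test[of "\<lambda>k. (T ^\<^sub>m k) $$ (i,j) / fact k * x^k" "\<lambda>k. inverse (fact k) * (real n * b * \<bar>x\<bar>)^k"] summable_exp[of "real n * b * \<bar>x\<bar>"]
    by blast
qed

lemma summable_pow_entry':
  fixes T :: "real mat"
  assumes T: "T \<in> carrier_mat n n" and i: "i < n" and j: "j < n"
  shows "summable (\<lambda>k. (T ^\<^sub>m k) $$ (i,j) / fact k * x^k)"
  by (rule summable_rabs_cancel[OF summable_pow_entry[OF assms]])

lemma mat_exp_entry:
  fixes T :: "real mat"
  assumes T: "T \<in> carrier_mat n n" and i: "i < n" and j: "j < n"
  shows "mat_exp (x \<cdot>\<^sub>m T) $$ (i,j) = (\<Sum>k. (T ^\<^sub>m k) $$ (i,j) / fact k * x^k)"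
proof -
  have "mat_exp (x \<cdot>\<^sub>m T) $$ (i,j) = (\<Sum>k. ((x \<cdot>\<^sub>m T) ^\<^sub>m k) $$ (i,j) / fact k)"
    using T i j unfolding mat_exp_def by simp
  also have "\<dots> = (\<Sum>k. (T ^\<^sub>m k) $$ (i,j) / fact k * x^k)"
  proof (intro arg_cong[where f=suminf] ext)
    fix k
    have "((x \<cdot>\<^sub>m T) ^\<^sub>m k) $$ (i,j) = x^k * (T ^\<^sub>m k) $$ (i,j)"
      unfolding pow_smult_mat[OF T] using T i j by simp
    then show "((x \<cdot>\<^sub>m T) ^\<^sub>m k) $$ (i,j) / fact k = (T ^\<^sub>m k) $$ (i,j) / fact k * x^k"
      by simp
  qed
  finally show ?thesis .
qed

lemma mat_exp_carrier:
  fixes T :: "real mat"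
  assumes T: "T \<in> carrier_mat n n"
  shows "mat_exp (x \<cdot>\<^sub>m T) \<in> carrier_mat n n"
  using T unfolding mat_exp_def by simp

definition gcoef :: "real vec \<Rightarrow> real mat \<Rightarrow> real vec \<Rightarrow> nat \<Rightarrow> real" where
  "gcoef a T v k = (a \<bullet> ((T ^\<^sub>m k) *\<^sub>v v)) / fact k"

lemma gcoef_expand:
  fixes T :: "real mat"
  assumes T: "T \<in> carrier_mat n n" and a: "a \<in> carrier_vec n" and v: "v \<in> carrier_vec n"
  shows "gcoef a T v k * x^k = (\<Sum>j<n. \<Sum>i<n. a $ i * v $ j * ((T ^\<^sub>m k) $$ (i,j) / fact k * x^k))"
proof -
  have "a \<bullet> ((T ^\<^sub>m k) *\<^sub>v v) = (\<Sum>i<n. a $ i * (\<Sum>j<n. (T ^\<^sub>m k) $$ (i,j) * v $ j))"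
    using T a v by (simp add: scalar_prod_def atLeast0LessThan)
  also have "\<dots> = (\<Sum>i<n. \<Sum>j<n. a $ i * v $ j * (T ^\<^sub>m k) $$ (i,j))"
    by (simp add: sum_distrib_left mult_ac)
  also have "\<dots> = (\<Sum>j<n. \<Sum>i<n. a $ i * v $ j * (T ^\<^sub>m k) $$ (i,j))"
    by (rule sum.swap)
  finally have *: "a \<bullet> ((T ^\<^sub>m k) *\<^sub>v v) = (\<Sum>j<n. \<Sum>i<n. a $ i * v $ j * (T ^\<^sub>m k) $$ (i,j))" .
  show ?thesis unfolding gcoef_def *
    by (simp add: sum_divide_distrib sum_distrib_right mult.assoc)
qed

lemma summable_gcoef:
  fixes T :: "real mat"
  assumes T: "T \<in> carrier_mat n n" and a: "a \<in> carrier_vec n" and v: "v \<in> carrier_vec n"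
  shows "summable (\<lambda>k. gcoef a T v k * x^k)"
  unfolding gcoef_expand[OF assms]
  by (intro summable_sum summable_mult summable_pow_entry'[OF T]) auto

lemma me_G:
  fixes T :: "real mat"
  assumes T: "T \<in> carrier_mat n n" and a: "a \<in> carrier_vec n" and v: "v \<in> carrier_vec n"
  shows "scalar_prod (me_row a T x) v = (\<Sum>k. gcoef a T v k * x^k)"
proof -
  let ?E = "mat_exp (x \<cdot>\<^sub>m T)"
  let ?f = "\<lambda>i j k. (T ^\<^sub>m k) $$ (i,j) / fact k * x^k"
  have E: "?E \<in> carrier_mat n n" by (rule mat_exp_carrier[OF T])
  have sm: "summable (?f i j)" if "i < n" "j < n" for i j
    by (rule summable_pow_entry'[OF T that])
  have "scalar_prod (me_row a T x) v = (\<Sum>j<n. (\<Sum>i<n. a $ i * ?E $$ (i,j)) * v $ j)"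
    using E a v unfolding me_row_def row_mult_def
    by (simp add: scalar_prod_def atLeast0LessThan)
  also have "\<dots> = (\<Sum>j<n. \<Sum>i<n. a $ i * v $ j * ?E $$ (i,j))"
    by (simp add: sum_distrib_right sum_distrib_left mult_ac)
  also have "\<dots> = (\<Sum>j<n. \<Sum>i<n. a $ i * v $ j * suminf (?f i j))"
    using mat_exp_entry[OF T] by (intro sum.cong refl) auto
  also have "\<dots> = (\<Sum>j<n. \<Sum>i<n. (\<Sum>k. a $ i * v $ j * ?f i j k))"
  proof (intro sum.cong refl)
    fix i j assume "i \<in> {..<n}" "j \<in> {..<n}"
    then show "a $ j * v $ i * suminf (?f j i) = (\<Sum>k. a $ j * v $ i * ?f j i k)"
      using suminf_mult[OF sm[of j i], of "a $ j * v $ i"] by simp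
  qed
  also have "\<dots> = (\<Sum>j<n. (\<Sum>k. \<Sum>i<n. a $ i * v $ j * ?f i j k))"
  proof (intro sum.cong refl)
    fix j assume j: "j \<in> {..<n}"
    show "(\<Sum>i<n. \<Sum>k. a $ i * v $ j * ?f i j k) = (\<Sum>k. \<Sum>i<n. a $ i * v $ j * ?f i j k)"
      using j by (intro suminf_sum[symmetric] summable_mult sm) auto
  qed
  also have "\<dots> = (\<Sum>k. \<Sum>j<n. \<Sum>i<n. a $ i * v $ j * ?f i j k)"
    using sm by (intro suminf_sum[symmetric] summable_sum summable_mult) auto
  also have "\<dots> = (\<Sum>k. gcoef a T v k * x^k)"
    unfolding gcoef_expand[OF assms] ..
  finally show ?thesis .
qed

lemma diffs_gcoef:
  fixes T :: "real mat"
  assumes T: "T \<in> carrier_mat n n" and v: "v \<in> carrier_vec n"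
  shows "diffs (gcoef a T v) = gcoef a T (T *\<^sub>v v)"
proof
  fix k
  have "(T ^\<^sub>m Suc k) *\<^sub>v v = (T ^\<^sub>m k) *\<^sub>v (T *\<^sub>v v)"
    using T v by (simp add: assoc_mult_mat_vec[of _ n n _ n])
  have "diffs (gcoef a T v) k = real (Suc k) * (a \<bullet> ((T ^\<^sub>m Suc k) *\<^sub>v v)) / (real (Suc k) * fact k)"
    unfolding diffs_def gcoef_def fact_Suc by simp
  also have "\<dots> = (a \<bullet> ((T ^\<^sub>m Suc k) *\<^sub>v v)) / fact k"
    by (rule mult_divide_mult_cancel_left) simp
  finally show "diffs (gcoef a T v) k = gcoef a T (T *\<^sub>v v) k"
    unfolding gcoef_def \<open>(T ^\<^sub>m Suc k) *\<^sub>v v = (T ^\<^sub>m k) *\<^sub>v (T *\<^sub>v v)\<close> .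
qed

lemma me_G_deriv:
  fixes T :: "real mat"
  assumes T: "T \<in> carrier_mat n n" and a: "a \<in> carrier_vec n" and v: "v \<in> carrier_vec n"
  shows "((\<lambda>x. scalar_prod (me_row a T x) v) has_real_derivative
           scalar_prod (me_row a T x) (T *\<^sub>v v)) (at x)"
proof -
  have Tv: "T *\<^sub>v v \<in> carrier_vec n" using T v by auto
  have "((\<lambda>x. \<Sum>k. gcoef a T v k * x^k) has_real_derivative (\<Sum>k. diffs (gcoef a T v) k * x^k)) (at x)"
    by (rule termdiffs_strong_converges_everywhere) (rule summable_gcoef[OF assms])
  then show ?thesis
    unfolding diffs_gcoef[OF T v] me_G[OF T a v, symmetric] me_G[OF T a Tv, symmetric] .
qed

lemma affine_mat_vec:
  fixes A :: "complex mat"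
  assumes A: "A \<in> carrier_mat n n" and w: "w \<in> carrier_vec n"
  shows "(s \<cdot>\<^sub>m A + t \<cdot>\<^sub>m 1\<^sub>m n) *\<^sub>v w = s \<cdot>\<^sub>v (A *\<^sub>v w) + t \<cdot>\<^sub>v w"
proof (rule eq_vecI)
  fix i assume "i < dim_vec (s \<cdot>\<^sub>v (A *\<^sub>v w) + t \<cdot>\<^sub>v w)"
  then have i: "i < n" using A w by simp
  have "((s \<cdot>\<^sub>m A + t \<cdot>\<^sub>m 1\<^sub>m n) *\<^sub>v w) $ i = (\<Sum>j<n. (s * A $$ (i,j) + t * (if j = i then 1 else 0)) * w $ j)"
    using A w i by (simp add: scalar_prod_def atLeast0LessThan)
  also have "\<dots> = (\<Sum>j<n. s * (A $$ (i,j) * w $ j)) + (\<Sum>j<n. (if j = i then t * w $ j else 0))"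
    by (subst sum.distrib[symmetric], intro sum.cong) (auto simp: algebra_simps)
  also have "\<dots> = s * (\<Sum>j<n. A $$ (i,j) * w $ j) + t * w $ i"
    using i by (simp add: sum_distrib_left sum.delta)
  also have "\<dots> = (s \<cdot>\<^sub>v (A *\<^sub>v w) + t \<cdot>\<^sub>v w) $ i"
    using A w i by (simp add: scalar_prod_def atLeast0LessThan)
  finally show "((s \<cdot>\<^sub>m A + t \<cdot>\<^sub>m 1\<^sub>m n) *\<^sub>v w) $ i = (s \<cdot>\<^sub>v (A *\<^sub>v w) + t \<cdot>\<^sub>v w) $ i" .
qed (use A w in simp)

lemma eigenvalue_affine:
  fixes A :: "complex mat"
  assumes A: "A \<in> carrier_mat n n" and s: "s \<noteq> 0"
    and ev: "eigenvalue (s \<cdot>\<^sub>m A + t \<cdot>\<^sub>m 1\<^sub>m n) \<nu>"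
  shows "eigenvalue A ((\<nu> - t) / s)"
proof -
  from ev obtain w where w: "w \<in> carrier_vec n" "w \<noteq> 0\<^sub>v n"
    and eq: "(s \<cdot>\<^sub>m A + t \<cdot>\<^sub>m 1\<^sub>m n) *\<^sub>v w = \<nu> \<cdot>\<^sub>v w"
    unfolding eigenvalue_def eigenvector_def using A by auto
  have "A *\<^sub>v w = ((\<nu> - t) / s) \<cdot>\<^sub>v w"
  proof (rule eq_vecI)
    fix i assume "i < dim_vec (((\<nu> - t) / s) \<cdot>\<^sub>v w)"
    then have i: "i < n" using w by simp
    have "(s \<cdot>\<^sub>v (A *\<^sub>v w) + t \<cdot>\<^sub>v w) $ i = (\<nu> \<cdot>\<^sub>v w) $ i"
      using eq affine_mat_vec[OF A w(1), of s t] by simp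
    then have "s * (A *\<^sub>v w) $ i + t * w $ i = \<nu> * w $ i" using i A w by simp
    then have "(A *\<^sub>v w) $ i = ((\<nu> - t) / s) * w $ i"
      using s by (simp add: field_simps)
    then show "(A *\<^sub>v w) $ i = (((\<nu> - t) / s) \<cdot>\<^sub>v w) $ i" using i w by simp
  qed (use A w in simp)
  then show ?thesis
    unfolding eigenvalue_def eigenvector_def using A w by (intro exI[of _ w]) auto
qed

lemma exp_series_real: "(\<lambda>n. inverse (fact n) * y^n) sums exp (y::real)"
  using exp_converges[of y] by (simp add: divide_inverse mult.commute)

lemma choose_shift_c:
  fixes Tc :: "complex mat"
  assumes Tc: "Tc \<in> carrier_mat n n"
    and eig: "\<And>ev. eigenvalue Tc ev \<Longrightarrow> Re ev < 0"
  shows "\<exists>c\<ge>1. \<forall>\<nu>. eigenvalue (complex_of_real (1/c) \<cdot>\<^sub>m Tc + 1 \<cdot>\<^sub>m 1\<^sub>m n) \<nu> \<longrightarrow> cmod \<nu> < 1"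
proof -
  define S where "S = spectrum Tc"
  have finS: "finite S" unfolding S_def by (rule card_finite_spectrum[OF Tc])
  define c where "c = 1 + (\<Sum>l\<in>S. cmod l ^ 2 / (- 2 * Re l))"
  have term_nonneg: "0 \<le> cmod l ^ 2 / (- 2 * Re l)" if "l \<in> S" for l
    using eig[of l] that unfolding S_def spectrum_def by (intro divide_nonneg_pos) auto
  have c_gt: "cmod l ^ 2 / (- 2 * Re l) < c" if "l \<in> S" for l
  proof -
    have "cmod l ^ 2 / (- 2 * Re l) \<le> (\<Sum>l\<in>S. cmod l ^ 2 / (- 2 * Re l))"
      using that finS term_nonneg by (intro member_le_sum) auto
    then show ?thesis unfolding c_def by simp
  qed
  have c1: "c \<ge> 1" unfolding c_def using term_nonneg by (simp add: sum_nonneg)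
  have "cmod \<nu> < 1" if ev: "eigenvalue (complex_of_real (1/c) \<cdot>\<^sub>m Tc + 1 \<cdot>\<^sub>m 1\<^sub>m n) \<nu>" for \<nu>
  proof -
    have s0: "complex_of_real (1/c) \<noteq> 0" using c1 by simp
    define l where "l = (\<nu> - 1) / complex_of_real (1/c)"
    have evl: "eigenvalue Tc l" unfolding l_def by (rule eigenvalue_affine[OF Tc s0 ev])
    then have lS: "l \<in> S" unfolding S_def spectrum_def by simp
    have r: "Re l < 0" by (rule eig[OF evl])
    have nu: "\<nu> = 1 + l / complex_of_real c"
      unfolding l_def using c1 by (simp add: field_simps)
    have pos: "0 < - 2 * Re l" using r by simp
    have "cmod l ^ 2 < c * (- 2 * Re l)" using c_gt[OF lS] pos_divide_less_eq[OF pos] by blast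
    then have q: "cmod l ^ 2 < - 2 * Re l * c" by (simp add: algebra_simps)
    have ren: "Re \<nu> = 1 + Re l / c" and imn: "Im \<nu> = Im l / c" unfolding nu
      by (simp_all add: Re_divide_of_real Im_divide_of_real)
    have "cmod \<nu> ^ 2 = (1 + Re l / c)^2 + (Im l / c)^2"
      unfolding cmod_power2 ren imn ..
    also have "\<dots> = 1 + (2 * Re l * c + (Re l^2 + Im l^2)) / c^2"
      using c1 by (simp add: field_simps power2_eq_square)
    also have "\<dots> < 1"
    proof -
      have "2 * Re l * c + (Re l^2 + Im l^2) < 0"
        using q unfolding cmod_power2 by simp
      then have "(2 * Re l * c + (Re l^2 + Im l^2)) / c^2 < 0"
        using c1 by (intro divide_neg_pos) auto
      then show ?thesis by simp
    qed
    finally have "cmod \<nu> ^ 2 < 1 ^ 2" by simp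
    then show ?thesis by (rule power_less_imp_less_base) simp
  qed
  then show ?thesis using c1 by blast
qed


lemma power_bound_from_spectrum:
  fixes D :: "real mat"
  assumes D: "D \<in> carrier_mat n n" and n: "n > 0"
    and eig: "\<And>\<nu>. eigenvalue (map_mat complex_of_real D) \<nu> \<Longrightarrow> cmod \<nu> < 1"
  shows "\<exists>Cb \<rho>. 0 < \<rho> \<and> \<rho> < 1 \<and> (\<forall>k i j. i < n \<longrightarrow> j < n \<longrightarrow> \<bar>(D ^\<^sub>m k) $$ (i,j)\<bar> \<le> Cb * \<rho> ^ k)"
proof -
  define Dc where "Dc = map_mat complex_of_real D"
  have Dc: "Dc \<in> carrier_mat n n" unfolding Dc_def using D by simp
  define \<rho>0 where "\<rho>0 = spectral_radius Dc"
  have "\<rho>0 \<in> norm ` spectrum Dc" unfolding \<rho>0_def by (rule spectral_radius_mem_max(1)[OF Dc n])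
  then obtain \<mu>0 where "eigenvalue Dc \<mu>0" and r0: "\<rho>0 = cmod \<mu>0" unfolding spectrum_def by auto
  then have r01: "\<rho>0 < 1" and r00: "0 \<le> \<rho>0" using eig unfolding Dc_def by auto
  define \<rho> where "\<rho> = (1 + \<rho>0) / 2"
  have rho: "0 < \<rho>" "\<rho> < 1" "\<rho>0 < \<rho>" using r01 r00 unfolding \<rho>_def by auto
  define A where "A = complex_of_real (1/\<rho>) \<cdot>\<^sub>m Dc"
  have A: "A \<in> carrier_mat n n" unfolding A_def using Dc by simp
  have A': "A = complex_of_real (1/\<rho>) \<cdot>\<^sub>m Dc + 0 \<cdot>\<^sub>m 1\<^sub>m n"
    unfolding A_def using Dc by (intro eq_matI) auto
  have "spectral_radius A \<in> norm ` spectrum A" by (rule spectral_radius_mem_max(1)[OF A n])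
  then obtain \<mu> where evA: "eigenvalue A \<mu>" and rA: "spectral_radius A = cmod \<mu>"
    unfolding spectrum_def by auto
  have s0: "complex_of_real (1/\<rho>) \<noteq> 0" using rho by simp
  have "eigenvalue Dc ((\<mu> - 0) / complex_of_real (1/\<rho>))"
    by (rule eigenvalue_affine[OF Dc s0]) (use evA A' in simp)
  then have "cmod ((\<mu> - 0) / complex_of_real (1/\<rho>)) \<le> \<rho>0"
    unfolding \<rho>0_def by (intro spectral_radius_mem_max(2)[OF Dc n]) (auto simp: spectrum_def)
  then have "cmod \<mu> * \<rho> \<le> \<rho>0" using rho by (simp add: norm_mult norm_divide)
  then have "cmod \<mu> * \<rho> < 1 * \<rho>" using rho by linarith
  then have "cmod \<mu> < 1" using rho(1) by (rule mult_right_less_imp_less[OF _ less_imp_le])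
  then have "spectral_radius A < 1" using rA by simp
  from spectral_radius_jnf_norm_bound_less_1_upper_triangular[OF A this]
  obtain Cb where Cb: "\<And>k. norm_bound (A ^\<^sub>m k) Cb" by blast
  have Aeq: "A = map_mat complex_of_real ((1/\<rho>) \<cdot>\<^sub>m D)"
    unfolding A_def Dc_def using D by (intro eq_matI) auto
  have D': "(1/\<rho>) \<cdot>\<^sub>m D \<in> carrier_mat n n" using D by simp
  have bound: "\<bar>(D ^\<^sub>m k) $$ (i,j)\<bar> \<le> Cb * \<rho> ^ k" if i: "i < n" and j: "j < n" for k i j
  proof -
    have "A ^\<^sub>m k = map_mat complex_of_real (((1/\<rho>) \<cdot>\<^sub>m D) ^\<^sub>m k)"
      unfolding Aeq by (rule of_real_hom.mat_hom_pow[OF D', symmetric])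
    also have "\<dots> = map_mat complex_of_real ((1/\<rho>)^k \<cdot>\<^sub>m (D ^\<^sub>m k))"
      unfolding pow_smult_mat[OF D] ..
    finally have Ak: "A ^\<^sub>m k = map_mat complex_of_real ((1/\<rho>)^k \<cdot>\<^sub>m (D ^\<^sub>m k))" .
    have "norm ((A ^\<^sub>m k) $$ (i,j)) \<le> Cb"
      using Cb[of k] A i j unfolding norm_bound_def by auto
    then have "(1/\<rho>)^k * \<bar>(D ^\<^sub>m k) $$ (i,j)\<bar> \<le> Cb"
      unfolding Ak using D i j rho by (simp add: norm_mult norm_power norm_divide)
    then have "\<rho>^k * ((1/\<rho>)^k * \<bar>(D ^\<^sub>m k) $$ (i,j)\<bar>) \<le> \<rho>^k * Cb"
      using rho by (intro mult_left_mono) auto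
    then show ?thesis using rho by (simp add: power_one_over field_simps)
  qed
  show ?thesis using rho bound by blast
qed

lemma exp_entry_bound:
  fixes T D :: "real mat"
  assumes T: "T \<in> carrier_mat n n" and D: "D \<in> carrier_mat n n" and c: "c > 0"
    and TD: "T = c \<cdot>\<^sub>m D + (-c) \<cdot>\<^sub>m 1\<^sub>m n"
    and rho: "0 \<le> \<rho>"
    and bnd: "\<And>k. \<bar>(D ^\<^sub>m k) $$ (i,j)\<bar> \<le> Cb * \<rho> ^ k"
    and x: "x \<ge> 0" and i: "i < n" and j: "j < n"
  shows "\<bar>mat_exp (x \<cdot>\<^sub>m T) $$ (i,j)\<bar> \<le> Cb * exp (- (c * (1 - \<rho>)) * x)"
proof -
  define a where "a m = (D ^\<^sub>m m) $$ (i,j) / fact m * (c * x) ^ m" for m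
  define b where "b l = inverse (fact l) * (- c * x) ^ l" for l
  have cx: "0 \<le> c * x" using c x by simp
  have abound: "\<bar>a m\<bar> \<le> Cb * (inverse (fact m) * (\<rho> * (c * x)) ^ m)" for m
  proof -
    have "\<bar>a m\<bar> = \<bar>(D ^\<^sub>m m) $$ (i,j)\<bar> * (inverse (fact m) * (c * x) ^ m)"
      unfolding a_def using cx by (simp add: abs_mult divide_inverse)
    also have "\<dots> \<le> (Cb * \<rho> ^ m) * (inverse (fact m) * (c * x) ^ m)"
      by (rule mult_right_mono[OF bnd]) (use cx in simp)
    also have "\<dots> = Cb * (inverse (fact m) * (\<rho> * (c * x)) ^ m)"
      by (simp add: power_mult_distrib)
    finally show ?thesis .
  qed
  have sg: "summable (\<lambda>m. Cb * (inverse (fact m) * (\<rho> * (c * x)) ^ m))"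
    by (intro summable_mult summable_exp)
  have sa: "summable (\<lambda>m. \<bar>a m\<bar>)"
    using summable_rabs_comparison_test[of a, OF _ sg] abound by blast
  have sb: "summable (\<lambda>l. \<bar>b l\<bar>)"
  proof -
    have "\<bar>b l\<bar> \<le> inverse (fact l) * \<bar>- c * x\<bar> ^ l" for l
      unfolding b_def by (simp add: abs_mult power_abs)
    then show ?thesis
      using summable_rabs_comparison_test[of b, OF _ summable_exp[of "\<bar>- c * x\<bar>"]] by blast
  qed
  have sumb: "(\<Sum>l. b l) = exp (- c * x)"
    unfolding b_def using exp_series_real sums_unique by metis
  have Tk: "(T ^\<^sub>m k) $$ (i,j) / fact k * x^k = (\<Sum>m\<le>k. a m * b (k - m))" for k
  proof -
    have "(T ^\<^sub>m k) $$ (i,j) = (\<Sum>m\<le>k. real (k choose m) * c^m * (-c)^(k-m) * (D ^\<^sub>m m) $$ (i,j))"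
      unfolding TD by (rule binom_mat_entry[OF D i j])
    then have "(T ^\<^sub>m k) $$ (i,j) / fact k * x^k
        = (\<Sum>m\<le>k. real (k choose m) * c^m * (-c)^(k-m) * (D ^\<^sub>m m) $$ (i,j) / fact k * x^k)"
      by (simp add: sum_divide_distrib sum_distrib_right)
    also have "\<dots> = (\<Sum>m\<le>k. a m * b (k - m))"
    proof (intro sum.cong refl)
      fix m assume "m \<in> {..k}"
      then have mk: "m \<le> k" by simp
      have ch: "real (k choose m) = fact k / (fact m * fact (k - m))"
        by (rule binomial_fact[OF mk])
      have xk: "x ^ k = x ^ m * x ^ (k - m)"
        using mk by (simp add: power_add[symmetric])
      have neg: "(- (c * x)) ^ l = (-c)^l * x^l" for l
        by (metis mult_minus_left power_mult_distrib)
      show "real (k choose m) * c^m * (-c)^(k-m) * (D ^\<^sub>m m) $$ (i,j) / fact k * x^k = a m * b (k - m)"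
        unfolding ch xk a_def b_def by (simp add: power_mult_distrib neg field_simps)
    qed
    finally show ?thesis .
  qed
  have "mat_exp (x \<cdot>\<^sub>m T) $$ (i,j) = (\<Sum>k. (T ^\<^sub>m k) $$ (i,j) / fact k * x^k)"
    by (rule mat_exp_entry[OF T i j])
  also have "\<dots> = (\<Sum>k. \<Sum>m\<le>k. a m * b (k - m))" unfolding Tk ..
  also have "\<dots> = (\<Sum>m. a m) * (\<Sum>l. b l)"
    by (rule Cauchy_product[symmetric]) (use sa sb in simp_all)
  finally have E: "mat_exp (x \<cdot>\<^sub>m T) $$ (i,j) = (\<Sum>m. a m) * exp (- c * x)"
    unfolding sumb .
  have "\<bar>\<Sum>m. a m\<bar> \<le> (\<Sum>m. \<bar>a m\<bar>)" by (rule summable_rabs[OF sa])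
  also have "\<dots> \<le> (\<Sum>m. Cb * (inverse (fact m) * (\<rho> * (c * x)) ^ m))"
    by (rule suminf_le[OF abound sa sg])
  also have "\<dots> = Cb * exp (\<rho> * (c * x))"
    using suminf_mult[OF summable_exp[of "\<rho> * (c * x)"], of Cb]
      sums_unique[OF exp_series_real[of "\<rho> * (c * x)"]] by simp
  finally have sa_le: "\<bar>\<Sum>m. a m\<bar> \<le> Cb * exp (\<rho> * (c * x))" .
  have "\<bar>mat_exp (x \<cdot>\<^sub>m T) $$ (i,j)\<bar> = \<bar>\<Sum>m. a m\<bar> * exp (- c * x)"
    unfolding E by (simp add: abs_mult)
  also have "\<dots> \<le> Cb * exp (\<rho> * (c * x)) * exp (- c * x)"
    by (rule mult_right_mono[OF sa_le]) simp
  also have "\<dots> = Cb * exp (- (c * (1 - \<rho>)) * x)"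
    by (simp add: mult.assoc exp_add[symmetric] algebra_simps)
  finally show ?thesis .
qed


lemma mat_exp_decay:
  fixes T :: "real mat"
  assumes T: "T \<in> carrier_mat n n"
    and eig: "\<And>ev. eigenvalue (map_mat complex_of_real T) ev \<Longrightarrow> Re ev < 0"
  shows "\<exists>C \<epsilon>. 0 < \<epsilon> \<and> (\<forall>x\<ge>0. \<forall>i<n. \<forall>j<n. \<bar>mat_exp (x \<cdot>\<^sub>m T) $$ (i,j)\<bar> \<le> C * exp (- \<epsilon> * x))"
proof (cases "n = 0")
  case True
  then show ?thesis by (intro exI[of _ 0] exI[of _ 1]) auto
next
  case False
  then have n: "n > 0" by simp
  define Tc where "Tc = map_mat complex_of_real T"
  have Tc: "Tc \<in> carrier_mat n n" unfolding Tc_def using T by simp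
  obtain c where c1: "c \<ge> 1"
    and cev: "\<And>\<nu>. eigenvalue (complex_of_real (1/c) \<cdot>\<^sub>m Tc + 1 \<cdot>\<^sub>m 1\<^sub>m n) \<nu> \<Longrightarrow> cmod \<nu> < 1"
    using choose_shift_c[OF Tc eig[folded Tc_def]] by blast
  define D where "D = (1/c) \<cdot>\<^sub>m T + 1 \<cdot>\<^sub>m 1\<^sub>m n"
  have D: "D \<in> carrier_mat n n" unfolding D_def using T by simp
  have Dc: "map_mat complex_of_real D = complex_of_real (1/c) \<cdot>\<^sub>m Tc + 1 \<cdot>\<^sub>m 1\<^sub>m n"
    unfolding D_def Tc_def using T by (intro eq_matI) auto
  obtain Cb \<rho> where rho: "0 < \<rho>" "\<rho> < 1"
    and bnd: "\<And>k i j. i < n \<Longrightarrow> j < n \<Longrightarrow> \<bar>(D ^\<^sub>m k) $$ (i,j)\<bar> \<le> Cb * \<rho> ^ k"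
    using power_bound_from_spectrum[OF D n] cev unfolding Dc by blast
  have TD: "T = c \<cdot>\<^sub>m D + (-c) \<cdot>\<^sub>m 1\<^sub>m n"
    unfolding D_def using T c1 by (intro eq_matI) (auto simp: field_simps)
  have c: "c > 0" using c1 by simp
  have "0 < c * (1 - \<rho>)" using c rho by simp
  moreover have "\<forall>x\<ge>0. \<forall>i<n. \<forall>j<n. \<bar>mat_exp (x \<cdot>\<^sub>m T) $$ (i,j)\<bar> \<le> Cb * exp (- (c * (1 - \<rho>)) * x)"
    using exp_entry_bound[OF T D c TD less_imp_le[OF rho(1)] bnd] by blast
  ultimately show ?thesis by blast
qed

lemma det_nonzero_of_eig:
  fixes T :: "real mat"
  assumes T: "T \<in> carrier_mat n n"
    and eig: "\<And>ev. eigenvalue (map_mat complex_of_real T) ev \<Longrightarrow> Re ev < 0"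
  shows "det T \<noteq> 0"
proof
  assume d: "det T = 0"
  define Tc where "Tc = map_mat complex_of_real T"
  have Tc: "Tc \<in> carrier_mat n n" unfolding Tc_def using T by simp
  have "det Tc = 0" unfolding Tc_def of_real_hom.hom_det d by simp
  then obtain v where v: "v \<in> carrier_vec n" "v \<noteq> 0\<^sub>v n" "Tc *\<^sub>v v = 0\<^sub>v n"
    using det_0_iff_vec_prod_zero[OF Tc] by blast
  have "Tc *\<^sub>v v = 0 \<cdot>\<^sub>v v" using v by (intro eq_vecI) auto
  then have "eigenvalue Tc 0"
    unfolding eigenvalue_def eigenvector_def using v Tc by (intro exI[of _ v]) auto
  then show False using eig[of 0] unfolding Tc_def by simp
qed

lemma minv_props:
  fixes T :: "real mat"
  assumes T: "T \<in> carrier_mat n n"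
    and eig: "\<And>ev. eigenvalue (map_mat complex_of_real T) ev \<Longrightarrow> Re ev < 0"
  shows "minv (- T) \<in> carrier_mat n n" "(- T) * minv (- T) = 1\<^sub>m n" "minv (- T) * (- T) = 1\<^sub>m n"
proof -
  have "T \<in> Units (ring_mat TYPE(real) n ())"
    by (rule det_non_zero_imp_unit[OF T det_nonzero_of_eig[OF T eig]])
  then obtain B where B: "B \<in> carrier_mat n n" "B * T = 1\<^sub>m n" "T * B = 1\<^sub>m n"
    unfolding Units_def ring_mat_def by auto
  have mT: "- T \<in> carrier_mat n n" using T by simp
  have mB: "- B \<in> carrier_mat n n" using B by simp
  have e1: "(- T) * (- B) = 1\<^sub>m n" using B T by simp
  have e2: "(- B) * (- T) = 1\<^sub>m n" using B T by simp
  have dr: "dim_row (- T) = n" using T by simp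
  have "minv (- T) = - B"
    unfolding minv_def dr
  proof (rule the_equality)
    show "- B \<in> carrier_mat n n \<and> - T * - B = 1\<^sub>m n \<and> - B * - T = 1\<^sub>m n" using mB e1 e2 by simp
  next
    fix C assume C: "C \<in> carrier_mat n n \<and> - T * C = 1\<^sub>m n \<and> C * - T = 1\<^sub>m n"
    have Cc: "C \<in> carrier_mat n n" using C by simp
    have "C = C * ((- T) * (- B))" unfolding e1 using right_mult_one_mat[OF Cc] by simp
    also have "\<dots> = (C * (- T)) * (- B)" by (simp only: assoc_mult_mat[OF Cc mT mB])
    also have "\<dots> = 1\<^sub>m n * (- B)" using C by (simp only:)
    also have "\<dots> = - B" by (rule left_mult_one_mat[OF mB])
    finally show "C = - B" .
  qed
  then show "minv (- T) \<in> carrier_mat n n" "(- T) * minv (- T) = 1\<^sub>m n" "minv (- T) * (- T) = 1\<^sub>m n"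
    using mB e1 e2 by simp_all
qed

lemma pow_mat_Suc_left:
  fixes A :: "real mat"
  assumes A: "A \<in> carrier_mat n n"
  shows "A ^\<^sub>m Suc k = A * A ^\<^sub>m k"
proof (induction k)
  case 0
  then show ?case using A by simp
next
  case (Suc k)
  have "A ^\<^sub>m Suc (Suc k) = (A * A ^\<^sub>m k) * A" using Suc by simp
  also have "\<dots> = A * (A ^\<^sub>m k * A)" using A by (simp add: assoc_mult_mat[of _ n n _ n _ n])
  finally show ?case by simp
qed

lemma T_chain:
  fixes T :: "real mat"
  assumes T: "T \<in> carrier_mat n n" and N: "N \<in> carrier_mat n n" and TN: "(- T) * N = 1\<^sub>m n"
    and t: "t \<in> carrier_vec n"
  shows "T *\<^sub>v ((N ^\<^sub>m Suc m) *\<^sub>v t) = - ((N ^\<^sub>m m) *\<^sub>v t)"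
proof -
  have TN': "T * N = - 1\<^sub>m n"
  proof -
    have "- (T * N) = 1\<^sub>m n" using TN uminus_mult_left_mat[of T N] T N by (metis carrier_matD(1) carrier_matD(2))
    then have "- (- (T * N)) = - 1\<^sub>m n" by simp
    then show ?thesis by simp
  qed
  have "T *\<^sub>v ((N ^\<^sub>m Suc m) *\<^sub>v t) = (T * (N * N ^\<^sub>m m)) *\<^sub>v t"
    unfolding pow_mat_Suc_left[OF N]
    by (rule assoc_mult_mat_vec[symmetric, OF T _ t]) (use N in simp)
  also have "\<dots> = ((T * N) * N ^\<^sub>m m) *\<^sub>v t"
    using assoc_mult_mat[OF T N pow_carrier_mat[OF N, of m]] by simp
  also have "\<dots> = (- (N ^\<^sub>m m)) *\<^sub>v t"
    unfolding TN' using N by simp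
  also have "\<dots> = - ((N ^\<^sub>m m) *\<^sub>v t)" using N t by simp
  finally show ?thesis .
qed

lemma me_row_sp:
  fixes T :: "real mat"
  assumes T: "T \<in> carrier_mat n n" and a: "a \<in> carrier_vec n" and v: "v \<in> carrier_vec n"
  shows "scalar_prod (me_row a T x) v = (\<Sum>j<n. \<Sum>i<n. a $ i * v $ j * mat_exp (x \<cdot>\<^sub>m T) $$ (i,j))"
proof -
  let ?E = "mat_exp (x \<cdot>\<^sub>m T)"
  have E: "?E \<in> carrier_mat n n" by (rule mat_exp_carrier[OF T])
  have "scalar_prod (me_row a T x) v = (\<Sum>j<n. (\<Sum>i<n. a $ i * ?E $$ (i,j)) * v $ j)"
    using E a v unfolding me_row_def row_mult_def
    by (simp add: scalar_prod_def atLeast0LessThan)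
  also have "\<dots> = (\<Sum>j<n. \<Sum>i<n. a $ i * v $ j * ?E $$ (i,j))"
    by (simp add: sum_distrib_right sum_distrib_left mult_ac)
  finally show ?thesis .
qed

lemma me_G_decay:
  fixes T :: "real mat"
  assumes T: "T \<in> carrier_mat n n" and a: "a \<in> carrier_vec n" and v: "v \<in> carrier_vec n"
    and eig: "\<And>ev. eigenvalue (map_mat complex_of_real T) ev \<Longrightarrow> Re ev < 0"
  shows "\<exists>C \<epsilon>. 0 < \<epsilon> \<and> (\<forall>x\<ge>0. \<bar>scalar_prod (me_row a T x) v\<bar> \<le> C * exp (- \<epsilon> * x))"
proof -
  obtain C \<epsilon> where e: "0 < \<epsilon>"
    and C: "\<And>x i j. x \<ge> 0 \<Longrightarrow> i < n \<Longrightarrow> j < n \<Longrightarrow> \<bar>mat_exp (x \<cdot>\<^sub>m T) $$ (i,j)\<bar> \<le> C * exp (- \<epsilon> * x)"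
    using mat_exp_decay[OF T eig] by blast
  define K where "K = (\<Sum>j<n. \<Sum>i<n. \<bar>a $ i * v $ j\<bar>)"
  have "\<bar>scalar_prod (me_row a T x) v\<bar> \<le> (K * C) * exp (- \<epsilon> * x)" if x: "x \<ge> 0" for x
  proof -
    have "\<bar>scalar_prod (me_row a T x) v\<bar> \<le> (\<Sum>j<n. \<Sum>i<n. \<bar>a $ i * v $ j * mat_exp (x \<cdot>\<^sub>m T) $$ (i,j)\<bar>)"
      unfolding me_row_sp[OF T a v] by (rule order_trans[OF sum_abs sum_mono[OF sum_abs]])
    also have "\<dots> \<le> (\<Sum>j<n. \<Sum>i<n. \<bar>a $ i * v $ j\<bar> * (C * exp (- \<epsilon> * x)))"
      unfolding abs_mult[of "a $ _ * v $ _"]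
      by (intro sum_mono mult_left_mono C x) auto
    also have "\<dots> = (K * C) * exp (- \<epsilon> * x)"
      unfolding K_def by (simp add: sum_distrib_left sum_distrib_right mult_ac)
    finally show ?thesis .
  qed
  then show ?thesis using e by blast
qed

lemma half_line_ftc:
  fixes f F :: "real \<Rightarrow> real"
  assumes deriv: "\<And>x. (F has_real_derivative f x) (at x)"
    and cont: "\<And>x. isCont f x"
    and int: "integrable lborel (\<lambda>x. indicator {z<..} x * f x)"
    and lim: "(F \<longlongrightarrow> 0) at_top"
  shows "(\<integral>x. indicator {z<..} x * f x \<partial>lborel) = - F z"
proof -
  have ei: "einterval (ereal z) \<infinity> = {z<..}" by (auto simp: einterval_iff)
  have "(LBINT x=ereal z..\<infinity>. f x) = 0 - F z"
  proof (rule interval_integral_FTC_integrable)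
    show "ereal z < \<infinity>" by simp
    show "(F has_vector_derivative f x) (at x)" for x
      using deriv[of x] by (simp add: has_real_derivative_iff_has_vector_derivative)
    show "isCont f x" for x by (rule cont)
    show "set_integrable lborel (einterval (ereal z) \<infinity>) f"
      unfolding ei set_integrable_def using int by simp
    have "isCont F z" using deriv[of z] by (rule DERIV_isCont)
    then have "(F \<longlongrightarrow> F z) (at_right z)"
      by (simp add: isCont_def filterlim_at_split)
    then show "((F \<circ> real_of_ereal) \<longlongrightarrow> F z) (at_right (ereal z))"
      by (simp add: ereal_tendsto_simps)
    show "((F \<circ> real_of_ereal) \<longlongrightarrow> 0) (at_left \<infinity>)"
      using lim by (simp add: ereal_tendsto_simps)
  qed
  then show ?thesis
    unfolding interval_integral_to_infinity_eq set_lebesgue_integral_def by simp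
qed

lemma half_line_integrable:
  fixes f :: "real \<Rightarrow> real"
  assumes cont: "\<And>x. isCont f x" and z: "0 \<le> z" and d: "0 < \<delta>"
    and bound: "\<And>x. z < x \<Longrightarrow> \<bar>f x\<bar> \<le> K * exp (- \<delta> * x)"
  shows "integrable lborel (\<lambda>x. indicator {z<..} x * f x)"
proof -
  have "set_integrable lborel {0<..} (\<lambda>x. exp (-(x * \<delta>)))"
    by (rule integrable_I0i_exp_mscale[OF d])
  then have i0: "integrable lborel (\<lambda>x. indicator {0<..} x * exp (-(x * \<delta>)))"
    unfolding set_integrable_def by simp
  have i1: "integrable lborel (\<lambda>x. \<bar>K\<bar> * (indicator {0<..} x * exp (-(x * \<delta>))))"
    by (rule integrable_mult_right[OF i0])
  have cf: "continuous_on UNIV f" using cont by (simp add: continuous_on_eq_continuous_at)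
  have meas: "(\<lambda>x. indicator {z<..} x * f x) \<in> borel_measurable lborel"
    using borel_measurable_continuous_onI[OF cf] by measurable
  show ?thesis
  proof (rule Bochner_Integration.integrable_bound[OF i1 meas], rule AE_I2)
    fix x
    show "norm (indicator {z<..} x * f x) \<le> norm (\<bar>K\<bar> * (indicator {0<..} x * exp (-(x * \<delta>))))"
    proof (cases "z < x")
      case True
      then have "\<bar>f x\<bar> \<le> \<bar>K\<bar> * exp (-(x * \<delta>))"
        using bound[OF True] by (smt (verit) mult.commute mult_minus_left exp_gt_zero mult_right_mono)
      then show ?thesis using True z by (simp add: abs_mult)
    next
      case False
      then show ?thesis by simp
    qed
  qed
qed

lemma exp_ge_pow_fact:
  fixes s :: real
  assumes "0 \<le> s"
  shows "s ^ r / fact r \<le> exp s"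
proof -
  have sm: "summable (\<lambda>n. inverse (fact n) * s ^ n)" by (rule summable_exp)
  have "sum (\<lambda>n. inverse (fact n) * s ^ n) {r} \<le> (\<Sum>n. inverse (fact n) * s ^ n)"
    by (rule sum_le_suminf[OF sm]) (use assms in auto)
  then show ?thesis using sums_unique[OF exp_series_real[of s]] by (simp add: divide_inverse mult.commute)
qed

lemma poly_decay:
  fixes g :: real
  assumes e: "0 < \<epsilon>" and z: "0 \<le> z" and x: "z \<le> x" and g: "\<bar>g\<bar> \<le> C * exp (- \<epsilon> * x)"
  shows "\<bar>(x - z) ^ r * g\<bar> \<le> (C * (fact r * (2 / \<epsilon>) ^ r)) * exp (- (\<epsilon> / 2) * x)"
proof -
  have x0: "0 \<le> x" using z x by simp
  have C0: "0 \<le> C" using g by (smt (verit) exp_gt_zero mult_nonneg_nonneg zero_le_mult_iff)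
  have "(\<epsilon> / 2 * x) ^ r / fact r \<le> exp (\<epsilon> / 2 * x)"
    by (rule exp_ge_pow_fact) (use e x0 in simp)
  then have "(\<epsilon> / 2 * x) ^ r \<le> exp (\<epsilon> / 2 * x) * fact r"
    by (simp add: pos_divide_le_eq)
  then have "(\<epsilon> / 2) ^ r * x ^ r \<le> fact r * exp (\<epsilon> / 2 * x)"
    by (simp only: power_mult_distrib mult.commute)
  then have xr: "x ^ r \<le> fact r * (2 / \<epsilon>) ^ r * exp (\<epsilon> / 2 * x)"
    using e by (simp add: field_simps power_divide)
  have "\<bar>(x - z) ^ r * g\<bar> = (x - z) ^ r * \<bar>g\<bar>" using x by (simp add: abs_mult)
  also have "\<dots> \<le> x ^ r * (C * exp (- \<epsilon> * x))"
    by (intro mult_mono power_mono g) (use x z in auto)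
  also have "\<dots> \<le> (fact r * (2 / \<epsilon>) ^ r * exp (\<epsilon> / 2 * x)) * (C * exp (- \<epsilon> * x))"
    by (intro mult_right_mono xr) (use C0 in simp)
  also have "\<dots> = (C * (fact r * (2 / \<epsilon>) ^ r)) * (exp (\<epsilon> / 2 * x) * exp (- \<epsilon> * x))"
    by (simp add: mult_ac)
  also have "exp (\<epsilon> / 2 * x) * exp (- \<epsilon> * x) = exp (- (\<epsilon> / 2) * x)"
    by (simp add: exp_add[symmetric] field_simps)
  finally show ?thesis .
qed

lemma exp_neg_tendsto:
  assumes "0 < (\<epsilon>::real)"
  shows "((\<lambda>x. C * exp (- \<epsilon> * x)) \<longlongrightarrow> 0) at_top"
proof -
  have "((\<lambda>x. exp (- \<epsilon> * x)) \<longlongrightarrow> 0) at_top"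
    using assms
    by (auto intro!: exp_at_bot[THEN filterlim_compose] filterlim_tendsto_pos_mult_at_top filterlim_ident
             simp: filterlim_uminus_at_bot)
  then show ?thesis using tendsto_mult_right_zero by blast
qed

locale mesetup =
  fixes n :: nat and a :: "real vec" and T :: "real mat" and t :: "real vec"
  assumes T: "T \<in> carrier_mat n n" and a: "a \<in> carrier_vec n" and t: "t \<in> carrier_vec n"
    and eig: "\<And>ev. eigenvalue (map_mat complex_of_real T) ev \<Longrightarrow> Re ev < 0"
begin

definition N where "N = minv (- T)"
definition w where "w m = (N ^\<^sub>m m) *\<^sub>v t"
definition Gw where "Gw m x = scalar_prod (me_row a T x) (w m)"

lemma N_carrier: "N \<in> carrier_mat n n" and NT: "(- T) * N = 1\<^sub>m n"
  unfolding N_def using minv_props[OF T eig] by auto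

lemma w_carrier: "w m \<in> carrier_vec n"
  unfolding w_def by (rule mult_mat_vec_carrier[OF pow_carrier_mat[OF N_carrier] t])

lemma dim_me_row: "dim_vec (me_row a T x) = n"
  unfolding me_row_def row_mult_def using carrier_matD(2)[OF mat_exp_carrier[OF T]] by simp

lemma Gw_deriv: "((Gw (Suc m)) has_real_derivative - Gw m x) (at x)"
proof -
  have "((Gw (Suc m)) has_real_derivative scalar_prod (me_row a T x) (T *\<^sub>v w (Suc m))) (at x)"
    unfolding Gw_def[abs_def] by (rule me_G_deriv[OF T a w_carrier])
  moreover have "T *\<^sub>v w (Suc m) = - w m"
    unfolding w_def by (rule T_chain[OF T N_carrier NT t])
  moreover have "scalar_prod (me_row a T x) (- w m) = - Gw m x"
    unfolding Gw_def using dim_me_row w_carrier[of m] by simp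
  ultimately show ?thesis by simp
qed

lemma Gw_cont: "isCont (Gw m) x"
proof -
  have "((Gw m) has_real_derivative scalar_prod (me_row a T x) (T *\<^sub>v w m)) (at x)"
    unfolding Gw_def[abs_def] by (rule me_G_deriv[OF T a w_carrier])
  then show ?thesis by (rule DERIV_isCont)
qed

lemma Gw_decay: "\<exists>C \<epsilon>. 0 < \<epsilon> \<and> (\<forall>x\<ge>0. \<bar>Gw m x\<bar> \<le> C * exp (- \<epsilon> * x))"
  unfolding Gw_def by (rule me_G_decay[OF T a w_carrier eig])

lemma Gw_weighted_bound:
  assumes z: "0 \<le> z"
  shows "\<exists>K \<delta>. 0 < \<delta> \<and> (\<forall>x. z \<le> x \<longrightarrow> \<bar>(x - z) ^ r * Gw m x\<bar> \<le> K * exp (- \<delta> * x))"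
proof -
  obtain C \<epsilon> where e: "0 < \<epsilon>" and C: "\<And>x. x \<ge> 0 \<Longrightarrow> \<bar>Gw m x\<bar> \<le> C * exp (- \<epsilon> * x)"
    using Gw_decay[of m] by blast
  have "\<bar>(x - z) ^ r * Gw m x\<bar> \<le> (C * (fact r * (2 / \<epsilon>) ^ r)) * exp (- (\<epsilon> / 2) * x)"
    if "z \<le> x" for x
    by (rule poly_decay[OF e z that C]) (use z that in simp)
  moreover have "0 < \<epsilon> / 2" using e by simp
  ultimately show ?thesis by blast
qed

lemma Gw_weighted_cont: "isCont (\<lambda>x. (x - z) ^ r * Gw m x) x"
  using Gw_cont by (intro continuous_intros) auto

lemma Gw_weighted_integrable:
  assumes z: "0 \<le> z"
  shows "integrable lborel (\<lambda>x. indicator {z<..} x * ((x - z) ^ r * Gw m x))"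
proof -
  obtain K \<delta> where d: "0 < \<delta>" and K: "\<And>x. z \<le> x \<Longrightarrow> \<bar>(x - z) ^ r * Gw m x\<bar> \<le> K * exp (- \<delta> * x)"
    using Gw_weighted_bound[OF z, of r m] by blast
  show ?thesis
    by (rule half_line_integrable[OF Gw_weighted_cont z d, where K=K]) (use K in auto)
qed

lemma Gw_weighted_lim:
  assumes z: "0 \<le> z"
  shows "((\<lambda>x. (x - z) ^ r * Gw m x) \<longlongrightarrow> 0) at_top"
proof -
  obtain K \<delta> where d: "0 < \<delta>" and K: "\<And>x. z \<le> x \<Longrightarrow> \<bar>(x - z) ^ r * Gw m x\<bar> \<le> K * exp (- \<delta> * x)"
    using Gw_weighted_bound[OF z, of r m] by blast
  have ev: "eventually (\<lambda>x. norm ((x - z) ^ r * Gw m x) \<le> K * exp (- \<delta> * x)) at_top"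
    unfolding eventually_at_top_linorder using K by auto
  show ?thesis by (rule Lim_null_comparison[OF ev exp_neg_tendsto[OF d]])
qed

lemma J_formula:
  assumes z: "0 \<le> z"
  shows "(\<integral>x. indicator {z<..} x * ((x - z) ^ r * Gw m x) \<partial>lborel) = fact r * Gw (m + r + 1) z"
proof (induction r arbitrary: m)
  case 0
  have "(\<integral>x. indicator {z<..} x * Gw m x \<partial>lborel) = - (- Gw (Suc m) z)"
  proof (rule half_line_ftc[where F = "\<lambda>x. - Gw (Suc m) x"])
    show "((\<lambda>x. - Gw (Suc m) x) has_real_derivative Gw m x) (at x)" for x
      using DERIV_minus[OF Gw_deriv[of m x]] by simp
    show "isCont (Gw m) x" for x by (rule Gw_cont)
    show "integrable lborel (\<lambda>x. indicator {z<..} x * Gw m x)"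
      using Gw_weighted_integrable[OF z, of 0 m] by simp
    show "((\<lambda>x. - Gw (Suc m) x) \<longlongrightarrow> 0) at_top"
      using tendsto_minus[OF Gw_weighted_lim[OF z, of 0 "Suc m"]] by simp
  qed
  then show ?case by simp
next
  case (Suc r)
  let ?f1 = "\<lambda>x. (x - z) ^ Suc r * Gw m x"
  let ?f2 = "\<lambda>x. real (Suc r) * ((x - z) ^ r * Gw (Suc m) x)"
  let ?F = "\<lambda>x. - ((x - z) ^ Suc r * Gw (Suc m) x)"
  have i1: "integrable lborel (\<lambda>x. indicator {z<..} x * ?f1 x)"
    by (rule Gw_weighted_integrable[OF z])
  have i2: "integrable lborel (\<lambda>x. indicator {z<..} x * ((x - z) ^ r * Gw (Suc m) x))"
    by (rule Gw_weighted_integrable[OF z])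
  have i2': "integrable lborel (\<lambda>x. indicator {z<..} x * ?f2 x)"
    using integrable_mult_right[OF i2, of "real (Suc r)"] by (simp add: mult_ac)
  have "(\<integral>x. indicator {z<..} x * (?f1 x - ?f2 x) \<partial>lborel) = - ?F z"
  proof (rule half_line_ftc[where F = ?F])
    show "(?F has_real_derivative ?f1 x - ?f2 x) (at x)" for x
    proof -
      have d0: "((\<lambda>x. x - z) has_real_derivative 1) (at x)"
        using DERIV_diff[OF DERIV_ident DERIV_const] by simp
      have d1: "((\<lambda>x. (x - z) ^ Suc r) has_real_derivative real (Suc r) * (x - z) ^ r) (at x)"
        using DERIV_power[OF d0, of "Suc r"] by simp
      have "((\<lambda>x. (x - z) ^ Suc r * Gw (Suc m) x) has_real_derivative
              (x - z) ^ Suc r * (- Gw m x) + real (Suc r) * (x - z) ^ r * Gw (Suc m) x) (at x)"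
        using DERIV_mult[OF d1 Gw_deriv[of m x]] by (simp add: algebra_simps)
      from DERIV_minus[OF this] show ?thesis by (simp add: algebra_simps)
    qed
    show "isCont (\<lambda>x. ?f1 x - ?f2 x) x" for x
      using Gw_cont by (intro continuous_intros) auto
    show "integrable lborel (\<lambda>x. indicator {z<..} x * (?f1 x - ?f2 x))"
      using Bochner_Integration.integrable_diff[OF i1 i2'] by (simp add: algebra_simps)
    show "(?F \<longlongrightarrow> 0) at_top"
      using tendsto_minus[OF Gw_weighted_lim[OF z, of "Suc r" "Suc m"]] by simp
  qed
  then have "(\<integral>x. indicator {z<..} x * ?f1 x - indicator {z<..} x * ?f2 x \<partial>lborel) = 0"
    by (simp add: algebra_simps)
  then have "(\<integral>x. indicator {z<..} x * ?f1 x \<partial>lborel) = (\<integral>x. indicator {z<..} x * ?f2 x \<partial>lborel)"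
    using Bochner_Integration.integral_diff[OF i1 i2'] by simp
  also have "\<dots> = real (Suc r) * (\<integral>x. indicator {z<..} x * ((x - z) ^ r * Gw (Suc m) x) \<partial>lborel)"
    by (simp add: mult_ac)
  also have "\<dots> = real (Suc r) * (fact r * Gw (Suc m + r + 1) z)"
    unfolding Suc.IH ..
  also have "\<dots> = fact (Suc r) * Gw (m + Suc r + 1) z" by simp
  finally show ?case .
qed

end

context mesetup
begin

lemma w0: "w 0 = t"
  unfolding w_def using N_carrier t by simp

lemma pow_w: "(minv (- T) ^\<^sub>m (r + 1)) *\<^sub>v t = w (r + 1)"
  unfolding w_def N_def ..

lemma me_l_w: "me_l T t = w 1"
  unfolding me_l_def w_def N_def[symmetric] using N_carrier by simp

lemma me_fun_Gw: "me_fun a T t x = Gw 0 x"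
  unfolding me_fun_def Gw_def w0 ..

lemma me_integral:
  assumes z: "0 \<le> z"
  shows "integrable lborel (\<lambda>y. indicator {z<..} y * ((y - z) ^ r * me_fun a T t y))"
    and "(\<integral>y. indicator {z<..} y * ((y - z) ^ r * me_fun a T t y) \<partial>lborel)
          = fact r * scalar_prod (me_row a T z) ((minv (- T) ^\<^sub>m (r + 1)) *\<^sub>v t)"
  unfolding me_fun_Gw[abs_def] pow_w
  using Gw_weighted_integrable[OF z, of r 0] J_formula[OF z, of r 0] Gw_def by simp_all

lemma me_zero:
  assumes z: "0 \<le> z" and nonneg: "\<And>x. 0 \<le> x \<Longrightarrow> 0 \<le> me_fun a T t x"
    and S0: "scalar_prod (me_row a T z) (me_l T t) = 0"
  shows "scalar_prod (me_row a T z) ((minv (- T) ^\<^sub>m (r + 1)) *\<^sub>v t) = 0"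
proof -
  let ?g = "\<lambda>y. indicator {z<..} y * me_fun a T t y"
  have ig: "integrable lborel ?g" using me_integral(1)[OF z, of 0] by simp
  have "(\<integral>y. ?g y \<partial>lborel) = scalar_prod (me_row a T z) (me_l T t)"
    using me_integral(2)[OF z, of 0] unfolding me_l_w pow_w by simp
  then have "(\<integral>y. ?g y \<partial>lborel) = 0" using S0 by simp
  moreover have nn: "AE y in lborel. 0 \<le> ?g y"
    using z nonneg by (intro AE_I2) (auto simp: indicator_def)
  ultimately have ae: "AE y in lborel. ?g y = 0"
    using integral_nonneg_eq_0_iff_AE[OF ig nn] by simp
  have "AE y in lborel. indicator {z<..} y * ((y - z) ^ r * me_fun a T t y) = 0"
    using ae by eventually_elim (metis mult.left_commute mult_zero_right)
  then have "(\<integral>y. indicator {z<..} y * ((y - z) ^ r * me_fun a T t y) \<partial>lborel) = 0"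
    by (rule integral_eq_zero_AE)
  then have "fact r * scalar_prod (me_row a T z) ((minv (- T) ^\<^sub>m (r + 1)) *\<^sub>v t) = 0"
    using me_integral(2)[OF z, of r] by simp
  then show ?thesis by simp
qed

end

lemma mesetup_of_triple:
  assumes "ME_triple n a T t"
  shows "mesetup n a T t"
  using assms unfolding ME_triple_def by unfold_locales auto

lemma ps_lborel: "product_sigma_finite (\<lambda>_::nat. lborel)"
  unfolding product_sigma_finite_def using sigma_finite_lborel by simp

lemma idx_lt: "i \<in> idx_set L M \<Longrightarrow> j < M \<Longrightarrow> i j < L"
  unfolding idx_set_def by (auto simp: PiE_iff)

lemma moment_formula:
  fixes P :: "'w measure" and X :: "'w \<Rightarrow> nat \<Rightarrow> real"
  assumes triples: "\<And>k. k < L \<Longrightarrow> ME_triple (n k) (a k) (T k) (t k)"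
    and f_nonneg: "\<And>x. (\<forall>j<M. 0 \<le> x j) \<Longrightarrow> mmeam_fun L M p a T t x \<ge> 0"
    and dist: "distributed P (PiM {..<M} (\<lambda>_. lborel)) X
                 (\<lambda>x. ennreal (mmeam_fun L M p a T t x))"
    and z_nonneg: "\<And>j. j < M \<Longrightarrow> 0 \<le> z j"
  shows "(\<integral>\<omega>. indicator {\<omega> \<in> space P. \<forall>j<M. X \<omega> j > z j} \<omega> * (\<Prod>j<M. (X \<omega> j - z j) ^ rr j) \<partial>P)
     = (\<Sum>i\<in>idx_set L M. p i * (\<Prod>j<M. fact (rr j) *
          scalar_prod (me_row (a (i j)) (T (i j)) (z j)) ((minv (- T (i j)) ^\<^sub>m (rr j + 1)) *\<^sub>v t (i j))))"
proof -
  interpret ps: product_sigma_finite "\<lambda>_::nat. lborel" by (rule ps_lborel)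
  let ?NN = "PiM {..<M} (\<lambda>_::nat. lborel)"
  let ?A = "{\<omega> \<in> space P. \<forall>j<M. X \<omega> j > z j}"
  let ?f = "mmeam_fun L M p a T t"
  define h where "h x = (\<Prod>j<M. indicator {z j<..} (x j) * (x j - z j) ^ rr j)" for x :: "nat \<Rightarrow> real"
  define F where "F i j y = indicator {z j<..} y * ((y - z j) ^ rr j * me_fun (a (i j)) (T (i j)) (t (i j)) y)"
    for i :: "nat \<Rightarrow> nat" and j y
  have Xm: "X \<in> measurable P ?NN" using distributed_measurable[OF dist] .
  have hm: "h \<in> borel_measurable ?NN" unfolding h_def by measurable
  have step1: "(\<integral>\<omega>. indicator ?A \<omega> * (\<Prod>j<M. (X \<omega> j - z j) ^ rr j) \<partial>P) = (\<integral>\<omega>. h (X \<omega>) \<partial>P)"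
  proof (rule Bochner_Integration.integral_cong[OF refl])
    fix \<omega> assume \<omega>: "\<omega> \<in> space P"
    show "indicator ?A \<omega> * (\<Prod>j<M. (X \<omega> j - z j) ^ rr j) = h (X \<omega>)"
    proof (cases "\<forall>j<M. X \<omega> j > z j")
      case True
      then show ?thesis using \<omega> unfolding h_def by (simp add: indicator_def)
    next
      case False
      then obtain j0 where j0: "j0 < M" "\<not> X \<omega> j0 > z j0" by auto
      have "h (X \<omega>) = 0" unfolding h_def
        by (rule prod_zero) (use j0 in \<open>auto intro!: bexI[of _ j0] simp: indicator_def\<close>)
      then show ?thesis using False by (simp add: indicator_def)
    qed
  qed
  have nnf: "0 \<le> ?f x" for x
    using f_nonneg[of x] unfolding mmeam_fun_def by auto
  have step2: "(\<integral>\<omega>. h (X \<omega>) \<partial>P) = (\<integral>x. ?f x * h x \<partial>?NN)"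
    using distributed_integral[OF dist hm] nnf by simp
  have step3: "?f x * h x = (\<Sum>i\<in>idx_set L M. p i * (\<Prod>j<M. F i j (x j)))" for x
  proof (cases "\<forall>j<M. 0 \<le> x j")
    case True
    have "?f x * h x = (\<Sum>i\<in>idx_set L M. p i * ((\<Prod>j<M. me_fun (a (i j)) (T (i j)) (t (i j)) (x j)) *
            (\<Prod>j<M. indicator {z j<..} (x j) * (x j - z j) ^ rr j)))"
      using True unfolding mmeam_fun_def h_def by (simp add: sum_distrib_right mult.assoc)
    also have "\<dots> = (\<Sum>i\<in>idx_set L M. p i * (\<Prod>j<M. F i j (x j)))"
      unfolding F_def prod.distrib[symmetric] by (simp add: mult_ac)
    finally show ?thesis .
  next
    case False
    then obtain j0 where j0: "j0 < M" "x j0 < 0" by auto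
    then have ind0: "indicator {z j0<..} (x j0) = (0::real)" using z_nonneg[OF j0(1)] by simp
    have p0: "(\<Prod>j<M. F i j (x j)) = 0" for i
      by (rule prod_zero) (use j0 ind0 in \<open>auto simp: F_def\<close>)
    have f0: "?f x = 0" using False unfolding mmeam_fun_def by auto
    show ?thesis unfolding f0 p0 by simp
  qed
  have Fint: "integrable lborel (F i j)" if "i \<in> idx_set L M" "j < M" for i j
  proof -
    interpret mesetup "n (i j)" "a (i j)" "T (i j)" "t (i j)"
      by (rule mesetup_of_triple[OF triples[OF idx_lt[OF that]]])
    show ?thesis unfolding F_def[abs_def] by (rule me_integral(1)[OF z_nonneg[OF that(2)]])
  qed
  have Fval: "integral\<^sup>L lborel (F i j) = fact (rr j) *
          scalar_prod (me_row (a (i j)) (T (i j)) (z j)) ((minv (- T (i j)) ^\<^sub>m (rr j + 1)) *\<^sub>v t (i j))"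
    if "i \<in> idx_set L M" "j < M" for i j
  proof -
    interpret mesetup "n (i j)" "a (i j)" "T (i j)" "t (i j)"
      by (rule mesetup_of_triple[OF triples[OF idx_lt[OF that]]])
    show ?thesis unfolding F_def[abs_def] by (rule me_integral(2)[OF z_nonneg[OF that(2)]])
  qed
  have prodint: "integrable ?NN (\<lambda>x. \<Prod>j<M. F i j (x j))" if "i \<in> idx_set L M" for i
    by (rule ps.product_integrable_prod) (use Fint that in auto)
  have "(\<integral>x. ?f x * h x \<partial>?NN) = (\<integral>x. (\<Sum>i\<in>idx_set L M. p i * (\<Prod>j<M. F i j (x j))) \<partial>?NN)"
    unfolding step3 ..
  also have "\<dots> = (\<Sum>i\<in>idx_set L M. (\<integral>x. p i * (\<Prod>j<M. F i j (x j)) \<partial>?NN))"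
    by (rule Bochner_Integration.integral_sum) (use prodint in \<open>auto intro: integrable_mult_right\<close>)
  also have "\<dots> = (\<Sum>i\<in>idx_set L M. p i * (\<integral>x. (\<Prod>j<M. F i j (x j)) \<partial>?NN))"
    by simp
  also have "\<dots> = (\<Sum>i\<in>idx_set L M. p i * (\<Prod>j<M. integral\<^sup>L lborel (F i j)))"
    by (intro sum.cong refl arg_cong[where f="\<lambda>v. p _ * v"] ps.product_integral_prod) (use Fint in auto)
  also have "\<dots> = (\<Sum>i\<in>idx_set L M. p i * (\<Prod>j<M. fact (rr j) *
          scalar_prod (me_row (a (i j)) (T (i j)) (z j)) ((minv (- T (i j)) ^\<^sub>m (rr j + 1)) *\<^sub>v t (i j))))"
    by (intro sum.cong refl arg_cong[where f="\<lambda>v. p _ * v"] prod.cong) (use Fval in auto)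
  finally show ?thesis unfolding step1 step2 .
qed

theorem theorem8:
  fixes P :: "'w measure" and X :: "'w \<Rightarrow> nat \<Rightarrow> real"
    and L M :: nat and n :: "nat \<Rightarrow> nat"
    and a :: "nat \<Rightarrow> real vec" and T :: "nat \<Rightarrow> real mat" and t :: "nat \<Rightarrow> real vec"
    and p :: "(nat \<Rightarrow> nat) \<Rightarrow> real"
    and z :: "nat \<Rightarrow> real" and r :: "nat \<Rightarrow> nat"
  assumes "prob_space P"
    and "L \<ge> 1" and "M \<ge> 1"
    and triples: "\<And>k. k < L \<Longrightarrow> ME_triple (n k) (a k) (T k) (t k)"
    and p_sum: "(\<Sum>i\<in>idx_set L M. p i) = 1"
    and f_nonneg: "\<And>x. (\<forall>j<M. 0 \<le> x j) \<Longrightarrow> mmeam_fun L M p a T t x \<ge> 0"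
    and dist: "distributed P (PiM {..<M} (\<lambda>_. lborel)) X
                 (\<lambda>x. ennreal (mmeam_fun L M p a T t x))"
    and z_nonneg: "\<And>j. j < M \<Longrightarrow> 0 \<le> z j"
    and pos: "measure P {\<omega> \<in> space P. \<forall>j<M. X \<omega> j > z j} > 0"
  shows "cond_exp_event P (\<lambda>\<omega>. \<Prod>j<M. (X \<omega> j - z j) ^ r j)
             {\<omega> \<in> space P. \<forall>j<M. X \<omega> j > z j}
         = (\<Sum>i\<in>idx_set L M. p_RL L M p a T t z i *
              (\<Prod>j<M. fact (r j) *
                  scalar_prod (alpha_RL (a (i j)) (T (i j)) (t (i j)) (z j))
                              ((minv (- T (i j)) ^\<^sub>m (r j + 1)) *\<^sub>v t (i j))))"
proof -
  let ?A = "{\<omega> \<in> space P. \<forall>j<M. X \<omega> j > z j}"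
  let ?I = "idx_set L M"
  define W where "W k zz s = scalar_prod (me_row (a k) (T k) zz) ((minv (- T k) ^\<^sub>m (s + 1)) *\<^sub>v t k)"
    for k zz s
  define S where "S k zz = scalar_prod (me_row (a k) (T k) zz) (me_l (T k) (t k))" for k zz
  have SW: "S k zz = W k zz 0" for k zz
    unfolding S_def W_def me_l_def by simp
  have num: "(\<integral>\<omega>. indicator ?A \<omega> * (\<Prod>j<M. (X \<omega> j - z j) ^ r j) \<partial>P)
      = (\<Sum>i\<in>?I. p i * (\<Prod>j<M. fact (r j) * W (i j) (z j) (r j)))"
    unfolding W_def by (rule moment_formula[OF triples f_nonneg dist z_nonneg])
  define D where "D = (\<Sum>i\<in>?I. p i * (\<Prod>j<M. S (i j) (z j)))"
  have den: "measure P ?A = D"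
  proof -
    have "measure P ?A = (\<integral>\<omega>. indicator ?A \<omega> * (\<Prod>j<M. (X \<omega> j - z j) ^ (0::nat)) \<partial>P)"
      by (simp add: Int_absorb2)
    also have "\<dots> = (\<Sum>i\<in>?I. p i * (\<Prod>j<M. fact ((\<lambda>_. 0::nat) j) * W (i j) (z j) ((\<lambda>_. 0::nat) j)))"
      unfolding W_def by (rule moment_formula[OF triples f_nonneg dist z_nonneg])
    finally show ?thesis unfolding D_def SW by simp
  qed
  have Dpos: "D > 0" using pos den by simp
  have key: "S k zz * (fact s * ((1 / S k zz) * W k zz s)) = fact s * W k zz s"
    if k: "k < L" and zz: "0 \<le> zz" for k zz s
  proof (cases "S k zz = 0")
    case True
    then have S0: "scalar_prod (me_row (a k) (T k) zz) (me_l (T k) (t k)) = 0" unfolding S_def .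
    interpret mesetup "n k" "a k" "T k" "t k"
      by (rule mesetup_of_triple[OF triples[OF k]])
    have nn: "\<And>x. 0 \<le> x \<Longrightarrow> 0 \<le> me_fun (a k) (T k) (t k) x"
      using triples[OF k] unfolding ME_triple_def by auto
    have "W k zz s = 0" unfolding W_def
      by (rule me_zero[OF zz nn S0])
    then show ?thesis by simp
  next
    case False
    then show ?thesis by simp
  qed
  have sp: "scalar_prod (alpha_RL (a k) (T k) (t k) zz) ((minv (- T k) ^\<^sub>m (s + 1)) *\<^sub>v t k)
      = (1 / S k zz) * W k zz s" if k: "k < L" for k zz s
  proof -
    interpret mesetup "n k" "a k" "T k" "t k"
      by (rule mesetup_of_triple[OF triples[OF k]])
    have c1: "me_row (a k) (T k) zz \<in> carrier_vec (n k)"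
      by (rule carrier_vecI[OF dim_me_row])
    have c2: "(minv (- T k) ^\<^sub>m (s + 1)) *\<^sub>v t k \<in> carrier_vec (n k)"
      unfolding pow_w by (rule w_carrier)
    show ?thesis unfolding alpha_RL_def W_def S_def
      by (rule smult_scalar_prod_distrib[OF c1 c2])
  qed
  have "(\<Sum>i\<in>?I. p_RL L M p a T t z i *
              (\<Prod>j<M. fact (r j) *
                  scalar_prod (alpha_RL (a (i j)) (T (i j)) (t (i j)) (z j))
                              ((minv (- T (i j)) ^\<^sub>m (r j + 1)) *\<^sub>v t (i j))))
      = (\<Sum>i\<in>?I. p i * (\<Prod>j<M. S (i j) (z j)) / D *
              (\<Prod>j<M. fact (r j) * ((1 / S (i j) (z j)) * W (i j) (z j) (r j))))"
  proof (intro sum.cong refl)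
    fix i assume i: "i \<in> ?I"
    have "p_RL L M p a T t z i = p i * (\<Prod>j<M. S (i j) (z j)) / D"
      unfolding p_RL_def D_def S_def ..
    moreover have "(\<Prod>j<M. fact (r j) *
                  scalar_prod (alpha_RL (a (i j)) (T (i j)) (t (i j)) (z j))
                              ((minv (- T (i j)) ^\<^sub>m (r j + 1)) *\<^sub>v t (i j)))
        = (\<Prod>j<M. fact (r j) * ((1 / S (i j) (z j)) * W (i j) (z j) (r j)))"
      using sp idx_lt[OF i] by (intro prod.cong refl) auto
    ultimately show "p_RL L M p a T t z i *
              (\<Prod>j<M. fact (r j) *
                  scalar_prod (alpha_RL (a (i j)) (T (i j)) (t (i j)) (z j))
                              ((minv (- T (i j)) ^\<^sub>m (r j + 1)) *\<^sub>v t (i j)))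
        = p i * (\<Prod>j<M. S (i j) (z j)) / D *
              (\<Prod>j<M. fact (r j) * ((1 / S (i j) (z j)) * W (i j) (z j) (r j)))" by simp
  qed
  also have "\<dots> = (\<Sum>i\<in>?I. p i * (\<Prod>j<M. fact (r j) * W (i j) (z j) (r j)) / D)"
  proof (intro sum.cong refl)
    fix i assume i: "i \<in> ?I"
    have "(\<Prod>j<M. S (i j) (z j)) * (\<Prod>j<M. fact (r j) * ((1 / S (i j) (z j)) * W (i j) (z j) (r j)))
        = (\<Prod>j<M. S (i j) (z j) * (fact (r j) * ((1 / S (i j) (z j)) * W (i j) (z j) (r j))))"
      by (rule prod.distrib[symmetric])
    also have "\<dots> = (\<Prod>j<M. fact (r j) * W (i j) (z j) (r j))"
      using key idx_lt[OF i] z_nonneg by (intro prod.cong refl) auto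
    finally have "(\<Prod>j<M. S (i j) (z j)) * (\<Prod>j<M. fact (r j) * ((1 / S (i j) (z j)) * W (i j) (z j) (r j)))
        = (\<Prod>j<M. fact (r j) * W (i j) (z j) (r j))" .
    then show "p i * (\<Prod>j<M. S (i j) (z j)) / D *
              (\<Prod>j<M. fact (r j) * ((1 / S (i j) (z j)) * W (i j) (z j) (r j)))
        = p i * (\<Prod>j<M. fact (r j) * W (i j) (z j) (r j)) / D"
      by (simp add: field_simps)
  qed
  also have "\<dots> = (\<Sum>i\<in>?I. p i * (\<Prod>j<M. fact (r j) * W (i j) (z j) (r j))) / D"
    by (simp add: sum_divide_distrib)
  also have "\<dots> = cond_exp_event P (\<lambda>\<omega>. \<Prod>j<M. (X \<omega> j - z j) ^ r j) ?A"
    unfolding cond_exp_event_def num den ..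
  finally show ?thesis by simp
qed

end
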